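(* Let $\Delta=\{z\in\mathbb{C}:|z|<1\}$, let $\alpha\in[0,1)$ and let $\beta\in\mathbb{C}$ with $\mathrm{Re}\{\beta\}>-1/2$. Let $f(z)=z|z|^{2\beta}h(z)\overline{g(z)}$ be a log-harmonic mapping in $\Delta$, where $h,g$ are analytic and non-vanishing in $\Delta$ with $h(0)=g(0)=1$. Then $f\in\mathcal{S}^*_{LH}(\alpha)$ if and only if there exists a Schwarz function $\psi$ such that $$h(z)=g(z)\exp\left(\int_0^z\frac{2(1-\alpha)\psi(t)}{t(1-\psi(t))}\,dt\right)\qquad(z\in\Delta).$$
   Context: A Schwarz function is an analytic $\psi$ in $\Delta$ with $\psi(0)=0$ and $|\psi(z)|\le|z|$. A mapping $f$ is log-harmonic in $\Delta$ if there is an analytic $w$ in $\Delta$ with $|w(z)|<1$ such that $\overline{f_{\bar z}}/\overline{f}=w\,f_z/f$. For $0\le\alpha<1$, $\mathcal{S}^*_{LH}(\alpha)$ is the set of log-harmonic mappings $f(z)=z|z|^{2\beta}h(z)\overline{g(z)}$ with $h(0)=g(0)=1$ satisfying $\mathrm{Re}\left\{\frac{zf_z-\bar z f_{\bar z}}{f}\right\}>\alpha$ for all $z\in\Delta$. *)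

theory Defs
  imports "HOL-Complex_Analysis.Complex_Analysis"
begin

definition wirt_z :: "(complex \<Rightarrow> complex) \<Rightarrow> complex \<Rightarrow> complex" where
  "wirt_z f z = (frechet_derivative f (at z) 1 - \<i> * frechet_derivative f (at z) \<i>) / 2"

definition wirt_zbar :: "(complex \<Rightarrow> complex) \<Rightarrow> complex \<Rightarrow> complex" where
  "wirt_zbar f z = (frechet_derivative f (at z) 1 + \<i> * frechet_derivative f (at z) \<i>) / 2"

definition schwarz_function :: "(complex \<Rightarrow> complex) \<Rightarrow> bool" where
  "schwarz_function \<psi> \<longleftrightarrow> \<psi> holomorphic_on ball 0 1 \<and> \<psi> 0 = 0 \<and>
     (\<forall>z\<in>ball 0 1. norm (\<psi> z) \<le> norm z)"

text \<open>The equation is required at the points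
  of the punctured disc (f vanishes at the origin for the mappings considered).\<close>
definition log_harmonic :: "(complex \<Rightarrow> complex) \<Rightarrow> bool" where
  "log_harmonic f \<longleftrightarrow> (\<exists>w. w holomorphic_on ball 0 1 \<and> (\<forall>z\<in>ball 0 1. norm (w z) < 1) \<and>
     (\<forall>z\<in>ball 0 1 - {0}. f differentiable (at z) \<and>
        cnj (wirt_zbar f z) / cnj (f z) = w z * wirt_z f z / f z))"

definition starlike_LH :: "real \<Rightarrow> (complex \<Rightarrow> complex) \<Rightarrow> bool" where
  "starlike_LH \<alpha> f \<longleftrightarrow> log_harmonic f \<and>
     (\<exists>\<beta> h g. Re \<beta> > -1/2 \<and> h holomorphic_on ball 0 1 \<and> g holomorphic_on ball 0 1 \<and>
        (\<forall>z\<in>ball 0 1. h z \<noteq> 0 \<and> g z \<noteq> 0) \<and> h 0 = 1 \<and> g 0 = 1 \<and>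
        (\<forall>z\<in>ball 0 1. f z = z * (complex_of_real (norm z)) powr (2 * \<beta>) * h z * cnj (g z))) \<and>
     (\<forall>z\<in>ball 0 1 - {0}. Re ((z * wirt_z f z - cnj z * wirt_zbar f z) / f z) > \<alpha>)"

end

theory Submission
  imports Defs
begin

lemma inner_id:
  fixes z v :: complex assumes "z \<noteq> 0"
  shows "complex_of_real (2 * (z \<bullet> v) / norm z ^ 2) = v / z + cnj v / cnj z"
proof -
  have "complex_of_real (norm z ^ 2) = z * cnj z" by (metis complex_norm_square of_real_power)
  moreover have "complex_of_real (2 * (z \<bullet> v)) = cnj z * v + z * cnj v"
    by (simp add: complex_eq_iff inner_complex_def algebra_simps)
  ultimately show ?thesis using assms
    by (simp add: field_simps del: of_real_power)
qed

lemma final_id: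
  fixes z E H G h' g' \<beta> :: complex
  assumes z: "z \<noteq> 0" and E: "E \<noteq> 0" and H: "H \<noteq> 0" and G: "G \<noteq> 0"
  defines "D \<equiv> \<lambda>v. v * E * H * cnj G + z * (E * (\<beta> * (v / z + cnj v / cnj z))) * H * cnj G
     + z * E * (h' * v) * cnj G + z * E * H * cnj (g' * v)"
  shows "(z * ((D 1 - \<i> * D \<i>) / 2) - cnj z * ((D 1 + \<i> * D \<i>) / 2)) / (z * E * H * cnj G)
     = 1 + z * h' / H - cnj (z * g' / G)"
proof -
  have cz: "cnj z \<noteq> 0" "cnj G \<noteq> 0" using z G by auto
  show ?thesis unfolding D_def using z E H G cz
    by (simp add: field_simps)
qed
lemma E_deriv:
  fixes z \<beta> :: complex assumes "z \<noteq> 0"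
  shows "((\<lambda>w. exp (\<beta> * of_real (ln (norm w ^ 2)))) has_derivative 
     (\<lambda>v. exp (\<beta> * of_real (ln (norm z ^ 2))) * (\<beta> * of_real (2 * (z \<bullet> v) / norm z ^ 2)))) (at z)"
proof -
  have n: "norm z ^ 2 > 0" using assms by simp
  have 1: "((\<lambda>w. ln (norm w ^ 2)) has_derivative (\<lambda>v. (1 / norm z ^ 2) * (2 *\<^sub>R (z \<bullet> v)))) (at z)"
    using has_derivative_compose[OF has_derivative_sqnorm_at[of z] 
       has_field_derivative_imp_has_derivative[OF DERIV_ln[OF n]]] by (simp add: field_simps)
  have 2: "((\<lambda>w. \<beta> * of_real (ln (norm w ^ 2))) has_derivative (\<lambda>v. \<beta> * of_real ((1 / norm z ^ 2) * (2 *\<^sub>R (z \<bullet> v))))) (at z)"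
    by (intro has_derivative_mult_right has_derivative_of_real 1)
  show ?thesis
    using has_derivative_compose[OF 2 has_field_derivative_imp_has_derivative[OF DERIV_exp[of "\<beta> * of_real (ln (norm z ^ 2))"]]]
    by (simp add: mult.commute)
qed

lemma powr_E:
  fixes w \<beta> :: complex assumes "w \<noteq> 0"
  shows "(complex_of_real (norm w)) powr (2 * \<beta>) = exp (\<beta> * of_real (ln (norm w ^ 2)))"
proof -
  have "norm w > 0" using assms by simp
  then show ?thesis
    by (simp add: powr_def Ln_of_real ln_realpow mult.assoc mult.left_commute)
qed

lemma key_quot:
  fixes \<beta> :: complex and f h g :: "complex \<Rightarrow> complex"
  assumes h: "h holomorphic_on ball 0 1" and g: "g holomorphic_on ball 0 1"
    and nz: "\<forall>z\<in>ball 0 1. h z \<noteq> 0 \<and> g z \<noteq> 0"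
    and f: "\<forall>z\<in>ball 0 1. f z = z * (complex_of_real (norm z)) powr (2 * \<beta>) * h z * cnj (g z)"
    and z: "z \<in> ball 0 1 - {0}"
  shows "(z * wirt_z f z - cnj z * wirt_zbar f z) / f z
     = 1 + z * deriv h z / h z - cnj (z * deriv g z / g z)"
proof -
  define E where "E = (\<lambda>w::complex. exp (\<beta> * of_real (ln (norm w ^ 2))))"
  have z0: "z \<noteq> 0" and zb: "z \<in> ball 0 1" using z by auto
  have fE: "f w = w * E w * h w * cnj (g w)" if "w \<in> ball 0 1 - {0}" for w
    using f that powr_E[of w \<beta>] by (auto simp: E_def)
  have hd: "(h has_field_derivative deriv h z) (at z)"
    using h zb by (meson DERIV_deriv_iff_field_differentiable holomorphic_on_imp_differentiable_at open_ball)
  have gd: "(g has_field_derivative deriv g z) (at z)"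
    using g zb by (meson DERIV_deriv_iff_field_differentiable holomorphic_on_imp_differentiable_at open_ball)
  define D where "D = (\<lambda>v. v * E z * h z * cnj (g z) 
      + z * (E z * (\<beta> * (v / z + cnj v / cnj z))) * h z * cnj (g z)
      + z * E z * (deriv h z * v) * cnj (g z) + z * E z * h z * cnj (deriv g z * v))"
  have Ed: "(E has_derivative (\<lambda>v. E z * (\<beta> * (v / z + cnj v / cnj z)))) (at z)"
    using E_deriv[OF z0, of \<beta>] unfolding E_def by (simp only: inner_id[OF z0])
  have "((\<lambda>w. w * E w * h w * cnj (g w)) has_derivative D) (at z)"
    unfolding D_def
    by (rule has_derivative_eq_rhs,
        (rule has_derivative_mult has_derivative_ident Ed has_field_derivative_imp_has_derivative[OF hd]
          has_derivative_cnj has_field_derivative_imp_has_derivative[OF gd])+)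
       (simp add: fun_eq_iff algebra_simps)
  then have "(f has_derivative D) (at z)"
    by (rule has_derivative_transform_within_open[where s = "ball 0 1 - {0}"]) (use z fE in auto)
  then have FD: "frechet_derivative f (at z) = D" by (metis frechet_derivative_at)
  have Ez: "E z \<noteq> 0" by (simp add: E_def)
  have "(z * wirt_z f z - cnj z * wirt_zbar f z) / f z =
     (z * ((D 1 - \<i> * D \<i>) / 2) - cnj z * ((D 1 + \<i> * D \<i>) / 2)) / (z * E z * h z * cnj (g z))"
    unfolding wirt_z_def wirt_zbar_def FD using fE[OF z] by simp
  also have "\<dots> = 1 + z * deriv h z / h z - cnj (z * deriv g z / g z)"
    unfolding D_def by (rule final_id) (use z0 Ez nz zb in auto)
  finally show ?thesis .
qed


lemma re_frac_bound:
  fixes s :: complex assumes "norm s < 1"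
  shows "Re (s / (1 - s)) > -1/2"
proof -
  define a where "a = Re s" define b where "b = Im s"
  have "(norm s)^2 < 1^2" by (rule power_strict_mono) (use assms in auto)
  then have ab: "a^2 + b^2 < 1" by (simp add: a_def b_def cmod_power2)
  have "a^2 < 1" using ab zero_le_power2[of b] by linarith
  then have "\<bar>a\<bar> < 1" by (rule abs_square_less_1[THEN iffD1])
  then have "1 - a > 0" by linarith
  then have "(1 - a)^2 > 0" by simp
  then have den: "(1 - a)^2 + b^2 > 0" using zero_le_power2[of b] by linarith
  have "Re (s / (1 - s)) = (a * (1 - a) - b * b) / ((1 - a)^2 + b^2)"
    by (simp add: Re_divide a_def b_def)
  also have "\<dots> > -1/2"
  proof -
    have "-1/2 * ((1 - a)^2 + b^2) < a * (1 - a) - b * b"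
      using ab by (simp add: power2_eq_square algebra_simps)
    then show ?thesis using den by (simp add: pos_less_divide_eq)
  qed
  finally show ?thesis .
qed

lemma norm_lt_shift:
  fixes w :: complex and c :: real
  assumes "c > 0" "Re w > - c / 2"
  shows "norm w < norm (w + of_real c)"
proof -
  have "(norm w)^2 < (norm (w + of_real c))^2"
  proof -
    have "0 < c * (2 * Re w + c)" using assms by (intro mult_pos_pos) auto
    moreover have "(norm (w + of_real c))^2 = (norm w)^2 + c*(2*Re w + c)"
      by (simp only: cmod_power2) (simp add: power2_eq_square algebra_simps)
    ultimately show ?thesis by linarith
  qed
  then show ?thesis using power2_less_imp_less norm_ge_zero by blast
qed

lemma contour_spike:
  fixes r k R :: "complex \<Rightarrow> complex"
  assumes R: "\<And>x. x \<in> ball 0 1 \<Longrightarrow> (R has_field_derivative r x) (at x within ball 0 1)"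
    and kr: "\<And>t. t \<in> ball 0 1 - {0} \<Longrightarrow> k t = r t"
    and z: "z \<in> ball 0 1"
  shows "contour_integral (linepath 0 z) k = R z - R 0"
proof (cases "z = 0")
  case True then show ?thesis by simp
next
  case False
  have sub: "path_image (linepath 0 z) \<subseteq> ball 0 1"
    using z by (simp add: closed_segment_subset)
  have "contour_integral (linepath 0 z) k = contour_integral (linepath 0 z) r"
    by (rule contour_integral_spike_finite_simple_path[where A = "{0}"])
       (use False sub kr in auto)
  also have "\<dots> = R z - R 0"
    using contour_integral_primitive[OF R _ sub] by (simp add: contour_integral_unique)
  finally show ?thesis .
qed

lemma frac_aux:
  fixes C W t :: complex assumes "C \<noteq> 0" "W + C \<noteq> 0" "t \<noteq> 0"
  shows "C * (W / (W + C)) / (t * (C / (W + C))) = W / t"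
proof -
  have "C / (W + C) \<noteq> 0" using assms by simp
  then have "(C / (W + C) * W) / (C / (W + C) * t) = W / t"
    by (rule mult_divide_mult_cancel_left)
  then show ?thesis by (simp add: mult.commute mult.left_commute)
qed

lemma frac_a1: fixes C P t :: complex shows "C * P / (t * (1 - P)) = C * (P / t) / (1 - P)"
  by simp

lemma frac_a2: fixes C P z :: complex assumes "z \<noteq> 0" shows "z * (C * (P / z) / (1 - P)) = C * (P / (1 - P))"
  using assms by simp

lemma exp_prim:
  fixes p q R :: "complex \<Rightarrow> complex"
  assumes pd: "\<And>z. z \<in> ball 0 1 \<Longrightarrow> (p has_field_derivative p z * q z) (at z)"
    and R: "\<And>x. x \<in> ball 0 1 \<Longrightarrow> (R has_field_derivative q x) (at x within ball 0 1)"
    and p0: "p 0 = 1"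
    and z: "z \<in> ball 0 1"
  shows "p z = exp (R z - R 0)"
proof -
  have "\<exists>c. \<forall>x\<in>ball (0::complex) 1. p x * exp (- R x) = c"
  proof (rule has_field_derivative_zero_constant)
    fix x :: complex assume x: "x \<in> ball 0 1"
    have d1: "(p has_field_derivative p x * q x) (at x within ball 0 1)"
      by (rule has_field_derivative_at_within[OF pd[OF x]])
    have d2: "((\<lambda>x. exp (- R x)) has_field_derivative exp (- R x) * (- q x)) (at x within ball 0 1)"
      by (rule DERIV_chain2[OF DERIV_exp DERIV_minus[OF R[OF x]]])
    show "((\<lambda>x. p x * exp (- R x)) has_field_derivative 0) (at x within ball 0 1)"
      using DERIV_mult[OF d1 d2] by (simp add: algebra_simps)
  qed auto
  then obtain c where c: "\<And>x. x \<in> ball 0 1 \<Longrightarrow> p x * exp (- R x) = c" by blast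
  have "c = exp (- R 0)" using c[of 0] p0 by simp
  then have "p z * exp (- R z) = exp (- R 0)" using c[OF z] by simp
  then have "p z = exp (- R 0) * exp (R z)"
    by (metis exp_minus_inverse mult.assoc mult.commute mult.right_neutral)
  then show ?thesis by (simp add: exp_diff exp_minus field_simps)
qed

theorem mainTheorem3:
  fixes \<alpha> :: real and \<beta> :: complex and f h g :: "complex \<Rightarrow> complex"
  assumes "0 \<le> \<alpha>" and "\<alpha> < 1"
    and "Re \<beta> > -1/2"
    and "h holomorphic_on ball 0 1" and "g holomorphic_on ball 0 1"
    and "\<forall>z\<in>ball 0 1. h z \<noteq> 0 \<and> g z \<noteq> 0"
    and "h 0 = 1" and "g 0 = 1"
    and "\<forall>z\<in>ball 0 1. f z = z * (complex_of_real (norm z)) powr (2 * \<beta>) * h z * cnj (g z)"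
    and "log_harmonic f"
  shows "starlike_LH \<alpha> f \<longleftrightarrow>
    (\<exists>\<psi> :: complex \<Rightarrow> complex. schwarz_function \<psi> \<and>
       (\<forall>z\<in>ball 0 1. h z = g z * exp (contour_integral (linepath 0 z)
          (\<lambda>t. 2 * (1 - complex_of_real \<alpha>) * \<psi> t / (t * (1 - \<psi> t))))))"
proof -
  note hol = assms(4,5) and nz = assms(6) and fdef = assms(9)
  define q where "q = (\<lambda>z. deriv h z / h z - deriv g z / g z)"
  define p where "p = (\<lambda>z. h z / g z)"
  define c where "c = 2 * (1 - \<alpha>)"
  have c0: "c > 0" using assms(2) by (simp add: c_def)
  have cc: "2 * (1 - complex_of_real \<alpha>) = complex_of_real c" by (simp add: c_def)
  have p0: "p 0 = 1" using assms(7,8) by (simp add: p_def)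
  have pnz: "p z \<noteq> 0" if "z \<in> ball 0 1" for z using nz that by (simp add: p_def)
  have qhol: "q holomorphic_on ball 0 1"
    unfolding q_def using hol nz by (intro holomorphic_intros) auto
  have hd: "(h has_field_derivative deriv h z) (at z)" if "z \<in> ball 0 1" for z
    using hol that by (meson DERIV_deriv_iff_field_differentiable holomorphic_on_imp_differentiable_at open_ball)
  have gd: "(g has_field_derivative deriv g z) (at z)" if "z \<in> ball 0 1" for z
    using hol that by (meson DERIV_deriv_iff_field_differentiable holomorphic_on_imp_differentiable_at open_ball)
  have pd: "(p has_field_derivative p z * q z) (at z)" if z: "z \<in> ball 0 1" for z
  proof -
    have "(p has_field_derivative (deriv h z * g z - h z * deriv g z) / (g z * g z)) (at z)"
      unfolding p_def by (rule DERIV_divide[OF hd[OF z] gd[OF z]]) (use nz z in auto)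
    moreover have "(deriv h z * g z - h z * deriv g z) / (g z * g z) = p z * q z"
      using nz z by (auto simp: p_def q_def field_simps)
    ultimately show ?thesis by simp
  qed
  have cond_iff: "starlike_LH \<alpha> f \<longleftrightarrow> (\<forall>z\<in>ball 0 1 - {0}. Re (1 + z * q z) > \<alpha>)"
  proof -
    have "Re ((z * wirt_z f z - cnj z * wirt_zbar f z) / f z) = Re (1 + z * q z)"
      if "z \<in> ball 0 1 - {0}" for z
      unfolding key_quot[OF hol nz fdef that] by (simp add: q_def right_diff_distrib del: complex_cnj_mult complex_cnj_divide)
    moreover have wit: "\<exists>\<beta> h g. Re \<beta> > -1/2 \<and> h holomorphic_on ball 0 1 \<and> g holomorphic_on ball 0 1 \<and>
        (\<forall>z\<in>ball 0 1. h z \<noteq> 0 \<and> g z \<noteq> 0) \<and> h 0 = 1 \<and> g 0 = 1 \<and>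
        (\<forall>z\<in>ball 0 1. f z = z * (complex_of_real (norm z)) powr (2 * \<beta>) * h z * cnj (g z))"
      using assms(3-9) by blast
    ultimately show ?thesis unfolding starlike_LH_def using assms(10) by simp
  qed
  have eq_iff: "(\<forall>z\<in>ball 0 1. h z = g z * exp (X z)) \<longleftrightarrow> (\<forall>z\<in>ball 0 1. p z = exp (X z))" for X
    using nz by (auto simp: p_def field_simps)
  show ?thesis
  proof
    assume "starlike_LH \<alpha> f"
    then have C: "\<And>z. z \<in> ball 0 1 - {0} \<Longrightarrow> Re (1 + z * q z) > \<alpha>" using cond_iff by auto
    define w where "w = (\<lambda>z. z * q z)"
    have hw: "Re (w z) > - c / 2" if "z \<in> ball 0 1" for z
    proof (cases "z = 0")
      case True then show ?thesis using c0 by (simp add: w_def)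
    next
      case False then show ?thesis using C[of z] that by (simp add: w_def c_def)
    qed
    have dnz: "w z + of_real c \<noteq> 0" if "z \<in> ball 0 1" for z
    proof
      assume "w z + of_real c = 0"
      then have "Re (w z + of_real c) = 0" by simp
      then have "Re (w z) = - c" by simp
      then show False using hw[OF that] c0 by simp
    qed
    define \<psi> where "\<psi> = (\<lambda>z. w z / (w z + of_real c))"
    have \<psi>hol: "\<psi> holomorphic_on ball 0 1"
      unfolding \<psi>_def w_def using dnz qhol unfolding w_def by (intro holomorphic_intros) auto
    have \<psi>0: "\<psi> 0 = 0" by (simp add: \<psi>_def w_def)
    have \<psi>1: "norm (\<psi> z) < 1" if "norm z < 1" for z
    proof -
      have zb: "z \<in> ball 0 1" using that by simp
      have "norm (w z) < norm (w z + of_real c)" by (rule norm_lt_shift[OF c0 hw[OF zb]])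
      then show ?thesis using dnz[OF zb] by (simp add: \<psi>_def norm_divide divide_less_eq)
    qed
    have schw: "schwarz_function \<psi>"
      unfolding schwarz_function_def
      using \<psi>hol \<psi>0 Schwarz_Lemma(1)[OF \<psi>hol \<psi>0 \<psi>1] by auto
    obtain R where R: "\<And>x. x \<in> ball 0 1 \<Longrightarrow> (R has_field_derivative q x) (at x within ball 0 1)"
      using holomorphic_convex_primitive'[OF convex_ball open_ball qhol] by blast
    have kq: "2 * (1 - complex_of_real \<alpha>) * \<psi> t / (t * (1 - \<psi> t)) = q t" if t: "t \<in> ball 0 1 - {0}" for t
    proof -
      have t0: "t \<noteq> 0" and tb: "t \<in> ball 0 1" using t by auto
      have cz: "complex_of_real c \<noteq> 0" using c0 by simp
      have "1 - \<psi> t = of_real c / (w t + of_real c)"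
        using dnz[OF tb] by (simp add: \<psi>_def field_simps)
      then have "of_real c * \<psi> t / (t * (1 - \<psi> t))
          = of_real c * (w t / (w t + of_real c)) / (t * (of_real c / (w t + of_real c)))"
        by (simp add: \<psi>_def)
      also have "\<dots> = w t / t" using dnz[OF tb] t0 cz by (intro frac_aux) auto
      also have "\<dots> = q t" using t0 by (simp add: w_def)
      finally show ?thesis unfolding cc .
    qed
    have "\<forall>z\<in>ball 0 1. p z = exp (contour_integral (linepath 0 z)
          (\<lambda>t. 2 * (1 - complex_of_real \<alpha>) * \<psi> t / (t * (1 - \<psi> t))))"
    proof
      fix z :: complex assume z: "z \<in> ball 0 1"
      have "contour_integral (linepath 0 z) (\<lambda>t. 2 * (1 - complex_of_real \<alpha>) * \<psi> t / (t * (1 - \<psi> t)))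
            = R z - R 0"
        by (rule contour_spike[OF R kq z])
      then show "p z = exp (contour_integral (linepath 0 z)
          (\<lambda>t. 2 * (1 - complex_of_real \<alpha>) * \<psi> t / (t * (1 - \<psi> t))))"
        using exp_prim[OF pd R p0 z] by simp
    qed
    then have hall: "\<forall>z\<in>ball 0 1. h z = g z * exp (contour_integral (linepath 0 z)
          (\<lambda>t. 2 * (1 - complex_of_real \<alpha>) * \<psi> t / (t * (1 - \<psi> t))))"
      by (simp only: eq_iff[where X = "\<lambda>z. contour_integral (linepath 0 z) (\<lambda>t. 2 * (1 - complex_of_real \<alpha>) * \<psi> t / (t * (1 - \<psi> t)))"])
    show "\<exists>\<psi>. schwarz_function \<psi> \<and> (\<forall>z\<in>ball 0 1. h z = g z * exp (contour_integral (linepath 0 z)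
          (\<lambda>t. 2 * (1 - complex_of_real \<alpha>) * \<psi> t / (t * (1 - \<psi> t)))))"
      by (rule exI[of _ \<psi>], rule conjI[OF schw hall])
  next
    assume "\<exists>\<psi>. schwarz_function \<psi> \<and> (\<forall>z\<in>ball 0 1. h z = g z * exp (contour_integral (linepath 0 z)
          (\<lambda>t. 2 * (1 - complex_of_real \<alpha>) * \<psi> t / (t * (1 - \<psi> t)))))"
    then obtain \<psi> where schw: "schwarz_function \<psi>" and
      heq0: "\<forall>z\<in>ball 0 1. h z = g z * exp (contour_integral (linepath 0 z)
          (\<lambda>t. 2 * (1 - complex_of_real \<alpha>) * \<psi> t / (t * (1 - \<psi> t))))"
      by blast
    have heq: "\<forall>z\<in>ball 0 1. p z = exp (contour_integral (linepath 0 z)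
          (\<lambda>t. 2 * (1 - complex_of_real \<alpha>) * \<psi> t / (t * (1 - \<psi> t))))"
      using heq0 by (simp only: eq_iff[where X = "\<lambda>z. contour_integral (linepath 0 z) (\<lambda>t. 2 * (1 - complex_of_real \<alpha>) * \<psi> t / (t * (1 - \<psi> t)))"])
    have \<psi>hol: "\<psi> holomorphic_on ball 0 1" and \<psi>0: "\<psi> 0 = 0"
      and \<psi>le: "\<And>z. z \<in> ball 0 1 \<Longrightarrow> norm (\<psi> z) \<le> norm z"
      using schw unfolding schwarz_function_def by auto
    have \<psi>1: "norm (\<psi> z) < 1" if "z \<in> ball 0 1" for z
      using \<psi>le[OF that] that by simp
    have \<psi>ne: "1 - \<psi> z \<noteq> 0" if "z \<in> ball 0 1" for z
      using \<psi>1[OF that] by auto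
    define \<phi> where "\<phi> = (\<lambda>z. if z = 0 then deriv \<psi> 0 else (\<psi> z - \<psi> 0) / (z - 0))"
    have \<phi>hol: "\<phi> holomorphic_on ball 0 1"
      unfolding \<phi>_def by (rule pole_lemma_open[OF \<psi>hol open_ball])
    define r where "r = (\<lambda>z. of_real c * \<phi> z / (1 - \<psi> z))"
    have rhol: "r holomorphic_on ball 0 1"
      unfolding r_def using \<phi>hol \<psi>hol \<psi>ne by (intro holomorphic_intros) auto
    obtain R where R: "\<And>x. x \<in> ball 0 1 \<Longrightarrow> (R has_field_derivative r x) (at x within ball 0 1)"
      using holomorphic_convex_primitive'[OF convex_ball open_ball rhol] by blast
    have kr: "2 * (1 - complex_of_real \<alpha>) * \<psi> t / (t * (1 - \<psi> t)) = r t" if t: "t \<in> ball 0 1 - {0}" for t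
    proof -
      have "\<phi> t = \<psi> t / t" using t \<psi>0 by (simp add: \<phi>_def)
      then show ?thesis unfolding cc r_def by (simp only: frac_a1)
    qed
    have pe: "p z = exp (R z - R 0)" if z: "z \<in> ball 0 1" for z
    proof -
      have "contour_integral (linepath 0 z) (\<lambda>t. 2 * (1 - complex_of_real \<alpha>) * \<psi> t / (t * (1 - \<psi> t)))
         = R z - R 0" by (rule contour_spike[OF R kr z])
      with heq z show ?thesis by simp
    qed
    have qr: "q z = r z" if z: "z \<in> ball 0 1" for z
    proof -
      have "((\<lambda>z. exp (R z - R 0)) has_field_derivative exp (R z - R 0) * r z) (at z within ball 0 1)"
      proof -
        have "((\<lambda>x. R x - R 0) has_field_derivative r z - 0) (at z within ball 0 1)"
          by (intro DERIV_diff R z DERIV_const)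
        from DERIV_chain2[OF DERIV_exp this] show ?thesis by (simp only: diff_zero)
      qed
      then have "((\<lambda>z. exp (R z - R 0)) has_field_derivative exp (R z - R 0) * r z) (at z)"
        by (simp only: at_within_open[OF z open_ball])
      then have "(p has_field_derivative exp (R z - R 0) * r z) (at z)"
        by (rule has_field_derivative_transform_within_open[OF _ open_ball z]) (simp add: pe)
      then have "(p has_field_derivative p z * r z) (at z)"
        by (simp only: pe[OF z, symmetric])
      then have "p z * q z = p z * r z" by (rule DERIV_unique[OF pd[OF z]])
      then show ?thesis using pnz[OF z] by simp
    qed
    have "Re (1 + z * q z) > \<alpha>" if z: "z \<in> ball 0 1 - {0}" for z
    proof -
      have zb: "z \<in> ball 0 1" and z0: "z \<noteq> 0" using z by auto
      have "z * q z = of_real c * (\<psi> z / (1 - \<psi> z))"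
      proof -
        have "\<phi> z = \<psi> z / z" using z0 \<psi>0 by (simp add: \<phi>_def)
        then have "z * q z = z * (of_real c * (\<psi> z / z) / (1 - \<psi> z))"
          using qr[OF zb] by (simp add: r_def)
        also have "\<dots> = of_real c * (\<psi> z / (1 - \<psi> z))" by (rule frac_a2[OF z0])
        finally show ?thesis .
      qed
      moreover have "Re (of_real c * X) = c * Re X" for X by simp
      ultimately have "Re (1 + z * q z) = 1 + c * Re (\<psi> z / (1 - \<psi> z))" by (simp only: plus_complex.sel one_complex.sel)
      moreover have "Re (\<psi> z / (1 - \<psi> z)) > - 1/2" by (rule re_frac_bound[OF \<psi>1[OF zb]])
      moreover have "c * Re (\<psi> z / (1 - \<psi> z)) > c * (- 1/2)"
        using mult_strict_left_mono[OF calculation(2) c0] .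
      moreover have "c * (- 1/2) = \<alpha> - 1" by (simp add: c_def field_simps)
      ultimately show ?thesis by linarith
    qed
    then show "starlike_LH \<alpha> f" using cond_iff by auto
  qed
qed

end
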